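(* Let $p_1,p_2\in(0,1)$ and let $(I_1,I_2)$ be a bivariate Bernoulli vector with pmf $f_{00}=(1-p_1)(1-p_2)+p_1p_2\theta$, $f_{01}=(1-p_1)p_2-p_1p_2\theta$, $f_{10}=p_1(1-p_2)-p_1p_2\theta$, $f_{11}=p_1p_2+p_1p_2\theta$ (where $f_{ij}=\Pr(I_1=i,I_2=j)$), with $$-\min\left(1,\frac{(1-p_1)(1-p_2)}{p_1p_2}\right)\le\theta\le\min\left(\frac{1-p_1}{p_1},\frac{1-p_2}{p_2}\right).$$ Let $U_m=U_{0,m}^{1-p_m}U_{1,m}^{I_m}$, $m=1,2$, with $U_{0,1},U_{0,2},U_{1,1},U_{1,2}$ independent standard uniform and independent of $(I_1,I_2)$. Then the copula of $(U_1,U_2)$ is $$C(u,v)=uv\left(1+\theta\left(1-u^{\frac{p_1}{1-p_1}}\right)\left(1-v^{\frac{p_2}{1-p_2}}\right)\right),\qquad (u,v)\in[0,1]^2.$$ *)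

theory Defs
  imports "HOL-Probability.Probability"
begin

definition copula :: "(real \<Rightarrow> real \<Rightarrow> real) \<Rightarrow> bool" where
  "copula C \<longleftrightarrow>
     (\<forall>u\<in>{0..1}. C u 0 = 0 \<and> C 0 u = 0 \<and> C u 1 = u \<and> C 1 u = u) \<and>
     (\<forall>u1 u2 v1 v2. 0 \<le> u1 \<and> u1 \<le> u2 \<and> u2 \<le> 1 \<and> 0 \<le> v1 \<and> v1 \<le> v2 \<and> v2 \<le> 1 \<longrightarrow>
        C u2 v2 - C u2 v1 - C u1 v2 + C u1 v1 \<ge> 0)"

definition copula_of :: "'a measure \<Rightarrow> ('a \<Rightarrow> real) \<Rightarrow> ('a \<Rightarrow> real) \<Rightarrow> (real \<Rightarrow> real \<Rightarrow> real) \<Rightarrow> bool" where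
  "copula_of M X Y C \<longleftrightarrow> copula C \<and>
     (\<forall>x y. measure M {\<omega>\<in>space M. X \<omega> \<le> x \<and> Y \<omega> \<le> y} =
            C (measure M {\<omega>\<in>space M. X \<omega> \<le> x}) (measure M {\<omega>\<in>space M. Y \<omega> \<le> y}))"

text \<open>Independence of two random variables with possibly different codomain types
(the library's indep_var requires a common codomain type; this is its
characterisation indep_var_eq, stated for heterogeneous types).\<close>
definition indep_rv :: "'a measure \<Rightarrow> 'b measure \<Rightarrow> ('a \<Rightarrow> 'b) \<Rightarrow> 'c measure \<Rightarrow> ('a \<Rightarrow> 'c) \<Rightarrow> bool" where
  "indep_rv M S X T Y \<longleftrightarrow> X \<in> measurable M S \<and> Y \<in> measurable M T \<and>
     prob_space.indep_set M
       (sigma_sets (space M) {X -` A \<inter> space M | A. A \<in> sets S})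
       (sigma_sets (space M) {Y -` B \<inter> space M | B. B \<in> sets T})"

end

theory Submission
  imports Defs
begin

lemma powr_le_iff_root:
  fixes a x s :: real
  assumes "0 < a" "0 \<le> x" "0 \<le> s"
  shows "s powr a \<le> x \<longleftrightarrow> s \<le> x powr (1/a)"
proof
  assume h: "s powr a \<le> x"
  have "s = (s powr a) powr (1/a)" using assms by (simp add: powr_powr)
  also have "\<dots> \<le> x powr (1/a)" using h assms by (intro powr_mono2) auto
  finally show "s \<le> x powr (1/a)" .
next
  assume h: "s \<le> x powr (1/a)"
  have "s powr a \<le> (x powr (1/a)) powr a" using h assms by (intro powr_mono2) auto
  also have "\<dots> = x" using assms by (simp add: powr_powr)
  finally show "s powr a \<le> x" .
qed

lemma x_times_powr:
  fixes a x :: real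
  assumes "0 < a" "0 \<le> x"
  shows "x * (x powr (1/a)) powr (1-a) = x powr (1/a)"
proof (cases "x = 0")
  case False
  then have "x * (x powr (1/a)) powr (1-a) = x powr 1 * x powr ((1-a)/a)"
    using assms by (simp add: powr_powr)
  also have "\<dots> = x powr (1 + (1-a)/a)" using False assms by (simp add: powr_add)
  also have "1 + (1-a)/a = 1/a" using assms by (simp add: field_simps)
  finally show ?thesis .
qed simp

lemma phi_integral:
  fixes a x :: real
  assumes a: "0 < a" "a < 1" and x: "0 \<le> x" "x \<le> 1"
  shows "((\<lambda>s. if s powr a \<le> x then 1 else x / s powr a) has_integral
           (x powr (1/a) + (x - x powr (1/a)) / (1-a))) {0..1}"
proof -
  define b where "b = x powr (1/a)"
  define \<phi> where "\<phi> = (\<lambda>s::real. if s powr a \<le> x then 1 else x / s powr a)"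
  have b0: "0 \<le> b" unfolding b_def by simp
  have b1: "b \<le> 1" unfolding b_def using a x by (simp add: powr_le1)
  have iff: "\<And>s. 0 \<le> s \<Longrightarrow> s powr a \<le> x \<longleftrightarrow> s \<le> b"
    unfolding b_def using a x by (intro powr_le_iff_root) auto
  have I1: "(\<phi> has_integral b) {0..b}"
  proof -
    have "((\<lambda>s. 1::real) has_integral b) {0..b}"
      using has_integral_const_real[of "1::real" 0 b] b0 by simp
    then show ?thesis
      by (rule has_integral_eq[rotated]) (auto simp: \<phi>_def iff)
  qed
  define H where "H = (\<lambda>s::real. x * s powr (1-a) / (1-a))"
  have I2: "(\<phi> has_integral (H 1 - H b)) {b..1}"
  proof (rule fundamental_theorem_of_calculus_strong[of "{b}"])
    show "finite {b}" by simp
    show "b \<le> 1" by fact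
    have "continuous_on {b..1} (\<lambda>s::real. s powr (1-a))"
      using a b0 by (intro continuous_on_powr' continuous_intros) auto
    then show "continuous_on {b..1} H" unfolding H_def using a
      by (intro continuous_on_divide continuous_on_mult continuous_on_const) auto
    fix s assume s: "s \<in> {b..1} - {b}"
    then have s0: "0 < s" "b < s" using b0 by auto
    have "(H has_real_derivative x * ((1-a) * s powr (1-a-1)) / (1-a)) (at s)"
      unfolding H_def using s0
      by (intro DERIV_cdivide DERIV_cmult has_real_derivative_powr) auto
    moreover have "x * ((1-a) * s powr (1-a-1)) / (1-a) = \<phi> s"
      using s0 iff[of s] a by (auto simp: \<phi>_def powr_minus_divide powr_diff)
    ultimately show "(H has_vector_derivative \<phi> s) (at s)"
      by (simp add: has_real_derivative_iff_has_vector_derivative)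
  qed
  have "H 1 - H b = x / (1-a) - x * b powr (1-a) / (1-a)"
    unfolding H_def by simp
  also have "x * b powr (1-a) = b" unfolding b_def using x_times_powr[of a x] a x by simp
  finally have "H 1 - H b = (x - b) / (1-a)" by (simp add: diff_divide_distrib)
  with I1 I2 have "(\<phi> has_integral (b + (x - b)/(1-a))) {0..1}"
    using has_integral_combine[OF b0 b1 I1] by simp
  then show ?thesis unfolding \<phi>_def b_def .
qed

lemma uniform_distr:
  assumes "distributed M lborel U (indicator {0..1})"
  shows "distr M borel U = density lborel (indicator {0..1})"
proof -
  have "distr M borel U = distr M lborel U"
    by (rule distr_cong) auto
  also have "\<dots> = density lborel (indicator {0..1})"
    using assms by (simp add: distributed_def)
  finally show ?thesis .
qed

lemma emeasure_unif:
  assumes "A \<in> sets borel"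
  shows "emeasure (density lborel (indicator {0..1})) A = emeasure lborel ({0..1::real} \<inter> A)"
  using assms by (intro emeasure_restricted) auto

lemma uniform_powr:
  fixes a x :: real
  assumes P: "prob_space M" and U: "distributed M lborel U (indicator {0..1})"
    and a: "0 < a" and x: "0 \<le> x" "x \<le> 1"
  shows "measure M {\<omega>\<in>space M. U \<omega> powr a \<le> x} = x powr (1/a)"
proof -
  have Um: "U \<in> borel_measurable M"
    using U distributed_measurable[OF U] by (simp add: measurable_lborel1)
  define A where "A = {s::real. s powr a \<le> x}"
  have A: "A \<in> sets borel" unfolding A_def
  proof -
    have "{s::real \<in> space borel. s powr a \<le> x} \<in> sets borel" by measurable
    then show "{s::real. s powr a \<le> x} \<in> sets borel" by simp
  qed
  have b1: "x powr (1/a) \<le> 1" using a x by (simp add: powr_le1)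
  have "{0..1} \<inter> A = {0..x powr (1/a)}"
    using powr_le_iff_root[OF a x(1)] a x b1 by (auto simp: A_def)
  then have em: "emeasure M {\<omega>\<in>space M. U \<omega> powr a \<le> x} = ennreal (x powr (1/a))"
    using emeasure_distr[OF Um A] uniform_distr[OF U] emeasure_unif[OF A]
    by (auto simp: A_def vimage_def Int_def conj_commute)
  then show ?thesis
  proof -
    interpret prob_space M by fact
    show ?thesis using em by (simp add: emeasure_eq_measure)
  qed
qed

lemma uniform_pair:
  fixes a x :: real
  assumes P: "prob_space M" and U: "distributed M lborel U (indicator {0..1})"
    and V: "distributed M lborel V (indicator {0..1})"
    and I: "prob_space.indep_var M borel U borel V"
    and a: "0 < a" "a < 1" and x: "0 \<le> x" "x \<le> 1"
  shows "measure M {\<omega>\<in>space M. U \<omega> powr a * V \<omega> \<le> x} =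
           x powr (1/a) + (x - x powr (1/a)) / (1-a)"
proof -
  interpret prob_space M by fact
  define D where "D = density lborel (indicator {0..1::real})"
  have Um: "U \<in> borel_measurable M"
    using distributed_measurable[OF U] by (simp add: measurable_lborel1)
  have Vm: "V \<in> borel_measurable M"
    using distributed_measurable[OF V] by (simp add: measurable_lborel1)
  have DU: "distr M borel U = D" "distr M borel V = D"
    using uniform_distr[OF U] uniform_distr[OF V] by (simp_all add: D_def)
  have DD: "D \<Otimes>\<^sub>M D = distr M (borel \<Otimes>\<^sub>M borel) (\<lambda>\<omega>. (U \<omega>, V \<omega>))"
    using I unfolding indep_var_distribution_eq DU by simp
  interpret D: prob_space D unfolding DU(1)[symmetric] by (rule prob_space_distr) (rule Um)
  define S where "S = {z::real\<times>real. fst z powr a * snd z \<le> x}"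
  have S: "S \<in> sets (borel \<Otimes>\<^sub>M borel)"
  proof -
    have "{z::real\<times>real \<in> space (borel \<Otimes>\<^sub>M borel). fst z powr a * snd z \<le> x} \<in> sets (borel \<Otimes>\<^sub>M borel)"
      by measurable
    then show ?thesis unfolding S_def by (simp add: space_pair_measure)
  qed
  have sD: "sets (D \<Otimes>\<^sub>M D) = sets (borel \<Otimes>\<^sub>M borel)"
    by (intro sets_pair_measure_cong) (simp_all add: D_def)
  define \<phi> where "\<phi> = (\<lambda>s::real. if s powr a \<le> x then 1 else x / s powr a)"
  have "emeasure M {\<omega>\<in>space M. U \<omega> powr a * V \<omega> \<le> x} = emeasure (D \<Otimes>\<^sub>M D) S"
    unfolding DD using S Um Vm by (subst emeasure_distr) (auto simp: S_def intro!: arg_cong[where f="emeasure M"])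
  also have "\<dots> = (\<integral>\<^sup>+s. emeasure D (Pair s -` S) \<partial>D)"
    using S sD by (intro D.emeasure_pair_measure_alt) simp
  also have "\<dots> = (\<integral>\<^sup>+s. indicator {0..1} s * emeasure D (Pair s -` S) \<partial>lborel)"
  proof -
    have sB: "sets (borel \<Otimes>\<^sub>M D) = sets (borel \<Otimes>\<^sub>M borel)"
      by (intro sets_pair_measure_cong) (simp_all add: D_def)
    have "(\<lambda>s. emeasure D (Pair s -` S)) \<in> borel_measurable borel"
      by (rule D.measurable_emeasure_Pair) (subst sB, rule S)
    then show ?thesis
      unfolding D_def by (intro nn_integral_density) (auto simp: D_def[symmetric])
  qed
  also have "\<dots> = (\<integral>\<^sup>+s. ennreal (indicator {0..1} s * \<phi> s) \<partial>lborel)"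
  proof (rule nn_integral_cong)
    fix s :: real
    show "indicator {0..1} s * emeasure D (Pair s -` S) = ennreal (indicator {0..1} s * \<phi> s)"
    proof (cases "s \<in> {0..1}")
      case False then show ?thesis by simp
    next
      case True
      define c where "c = s powr a"
      have c0: "0 \<le> c" and c1: "c \<le> 1" using True a by (auto simp: c_def powr_le1)
      have PS: "Pair s -` S = {t. c * t \<le> x}" by (auto simp: S_def c_def)
      have Bm: "{t::real. c * t \<le> x} \<in> sets borel"
      proof -
        have "{t::real \<in> space borel. c * t \<le> x} \<in> sets borel" by measurable
        then show ?thesis by simp
      qed
      have "emeasure D (Pair s -` S) = ennreal (\<phi> s)"
      proof (cases "c \<le> x")
        case True
        have "{0..1} \<inter> {t. c * t \<le> x} = {0..1::real}"
          using True c0 c1 by (auto intro: order.trans[OF mult_left_le_one_le[of c]] simp: mult.commute)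
        then show ?thesis using True unfolding PS D_def emeasure_unif[OF Bm]
          by (simp add: \<phi>_def c_def)
      next
        case False
        then have cp: "0 < c" using x by simp
        have t1: "t \<le> 1" if "t * c \<le> x" for t
        proof -
          have "t * c \<le> c" using that False by simp
          then show ?thesis using cp mult_le_cancel_right2[of t c] by simp
        qed
        have E: "{0..1} \<inter> {t. c * t \<le> x} = {0..x/c}"
          using False cp t1 by (auto simp: field_simps)
        have nn: "0 \<le> x / c" using x(1) cp by (rule divide_nonneg_pos)
        have ph: "\<phi> s = x / c" using False unfolding \<phi>_def c_def by argo
        have "emeasure lborel {0..x/c} = ennreal (x/c)" using nn by simp
        then show ?thesis unfolding PS D_def emeasure_unif[OF Bm] E ph .
      qed
      moreover have "indicator {0..1} s = (1::ennreal)" "indicator {0..1} s = (1::real)" using True by auto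
      ultimately show ?thesis by (simp only: mult_1_left)
    qed
  qed
  also have "\<dots> = ennreal (x powr (1/a) + (x - x powr (1/a)) / (1-a))"
  proof (rule nn_integral_has_integral_lborel)
    show "(\<lambda>s. indicator {0..1} s * \<phi> s) \<in> borel_measurable borel"
      unfolding \<phi>_def by measurable
    have "0 \<le> \<phi> s" for s
    proof (cases "s powr a \<le> x")
      case True
      have "\<phi> s = 1" unfolding \<phi>_def by (rule if_P[OF True])
      then show ?thesis by linarith
    next
      case False
      have "0 \<le> x / s powr a" using x(1) by (intro divide_nonneg_nonneg) (rule x(1), rule powr_ge_zero)
      moreover have "\<phi> s = x / s powr a" unfolding \<phi>_def by (rule if_not_P[OF False])
      ultimately show ?thesis by linarith
    qed
    then show "\<And>s. 0 \<le> indicator {0..1} s * \<phi> s" by (intro mult_nonneg_nonneg) auto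
    show "((\<lambda>s. indicator {0..1} s * \<phi> s) has_integral (x powr (1/a) + (x - x powr (1/a)) / (1-a))) UNIV"
      using has_integral_restrict_UNIV[THEN iffD2, OF phi_integral[OF a x], folded \<phi>_def]
      by (rule has_integral_eq[rotated]) (simp add: indicator_def \<phi>_def)
  qed
  finally have "emeasure M {\<omega>\<in>space M. U \<omega> powr a * V \<omega> \<le> x} =
     ennreal (x powr (1/a) + (x - x powr (1/a)) / (1-a))" .
  moreover have "0 \<le> x powr (1/a) + (x - x powr (1/a)) / (1-a)"
  proof -
    have "x powr (1/a) \<le> x powr 1" using a x by (intro powr_mono') auto
    then have "0 \<le> x - x powr (1/a)" using x by simp
    then have "0 \<le> (x - x powr (1/a)) / (1-a)" using a by (intro divide_nonneg_pos) auto
    then show ?thesis by (intro add_nonneg_nonneg) auto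
  qed
  ultimately show ?thesis by (simp add: emeasure_eq_measure)
qed

lemma (in prob_space) clip_cdf:
  fixes Z :: "'a \<Rightarrow> real"
  assumes Z: "Z \<in> borel_measurable M"
    and G: "\<And>x. 0 \<le> x \<Longrightarrow> x \<le> 1 \<Longrightarrow> prob {\<omega>\<in>space M. Z \<omega> \<le> x} = G x"
    and G0: "G 0 = 0" and G1: "G 1 = 1"
  shows "prob {\<omega>\<in>space M. Z \<omega> \<le> x} = G (max 0 (min 1 x))"
proof -
  have ev: "{\<omega>\<in>space M. Z \<omega> \<le> t} \<in> events" for t using Z by measurable
  consider "x < 0" | "1 < x" | "0 \<le> x \<and> x \<le> 1" by linarith
  then show ?thesis
  proof cases
    case 1
    have "prob {\<omega>\<in>space M. Z \<omega> \<le> x} \<le> prob {\<omega>\<in>space M. Z \<omega> \<le> 0}"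
      using 1 ev by (intro finite_measure_mono) auto
    also have "\<dots> = 0" using G[of 0] G0 by simp
    finally show ?thesis using 1 G0 measure_nonneg[of M] by (simp add: order.antisym)
  next
    case 2
    have "1 = prob {\<omega>\<in>space M. Z \<omega> \<le> 1}" using G[of 1] G1 by simp
    also have "\<dots> \<le> prob {\<omega>\<in>space M. Z \<omega> \<le> x}"
      using 2 ev by (intro finite_measure_mono) auto
    finally show ?thesis using 2 G1 prob_le_1 by (simp add: order.antisym)
  next
    case 3 then show ?thesis using G by simp
  qed
qed

lemma (in prob_space) decomp:
  fixes E :: "'i \<Rightarrow> 'a set"
  assumes K: "finite K" "E ` K \<subseteq> events" "disjoint_family_on E K"
    and one: "(\<Sum>k\<in>K. prob (E k)) = 1" and F: "F \<in> events"
  shows "prob F = (\<Sum>k\<in>K. prob (F \<inter> E k))"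
proof -
  define G where "G = (\<Union>k\<in>K. E k)"
  have Gev: "G \<in> events" unfolding G_def using K by auto
  have PG: "prob G = 1" unfolding G_def using finite_measure_finite_Union[OF K] one by simp
  have "prob (F - G) \<le> prob (space M - G)"
    using F Gev by (intro finite_measure_mono) (auto dest: sets.sets_into_space)
  also have "\<dots> = 0" using prob_compl[OF Gev] PG by simp
  finally have z: "prob (F - G) = 0" using measure_nonneg[of M "F - G"] by linarith
  have "prob F = prob ((F \<inter> G) \<union> (F - G))" by (intro arg_cong[where f=prob]) auto
  also have "\<dots> = prob (F \<inter> G) + prob (F - G)"
    using F Gev by (intro finite_measure_Union) auto
  also have "F \<inter> G = (\<Union>k\<in>K. F \<inter> E k)" unfolding G_def by auto
  also have "prob (\<Union>k\<in>K. F \<inter> E k) = (\<Sum>k\<in>K. prob (F \<inter> E k))"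
    using K F by (intro finite_measure_finite_Union) (auto simp: disjoint_family_on_def)
  finally show ?thesis using z by simp
qed

lemma x_times_powr2:
  fixes p x :: real
  assumes "0 < p" "p < 1" "0 \<le> x"
  shows "x * x powr (p / (1-p)) = x powr (1/(1-p))"
proof (cases "x = 0")
  case False
  then have "x * x powr (p/(1-p)) = x powr 1 * x powr (p/(1-p))" using assms by simp
  also have "\<dots> = x powr (1 + p/(1-p))" using False assms by (simp add: powr_add)
  also have "1 + p/(1-p) = 1/(1-p)" using assms by (simp add: field_simps)
  finally show ?thesis .
qed simp

lemma alg:
  fixes p1 p2 \<theta> x y s t :: real
  assumes "p1 \<noteq> 0" "p2 \<noteq> 0"
  shows "((1-p1)*(1-p2)+p1*p2*\<theta>) * (x * s) * (y * t) + ((1-p1)*p2 - p1*p2*\<theta>) * (x * s) * (y * t + (y-y * t)/p2)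
    + (p1*(1-p2) - p1*p2*\<theta>) * (x * s + (x-x * s)/p1) * (y * t) + (p1*p2+p1*p2*\<theta>) * (x * s + (x-x * s)/p1) * (y * t + (y-y * t)/p2)
    = x*y*(1+\<theta>*(1 - s)*(1 - t))"
  using assms by (simp add: field_simps)
lemma alg2:
  fixes p1 p2 \<theta> x s :: real
  assumes "p1 \<noteq> 0"
  shows "(((1-p1)*(1-p2)+p1*p2*\<theta>) + ((1-p1)*p2 - p1*p2*\<theta>)) * (x * s) + ((p1*(1-p2) - p1*p2*\<theta>) + (p1*p2+p1*p2*\<theta>)) * (x * s + (x-x * s)/p1) = x"
  using assms by (simp add: field_simps)

theorem proposition4p1:
  fixes M :: "'a measure"
    and p1 p2 \<theta> :: real
    and I1 I2 :: "'a \<Rightarrow> nat"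
    and U01 U02 U11 U12 :: "'a \<Rightarrow> real"
  assumes "prob_space M"
    and "0 < p1" "p1 < 1" "0 < p2" "p2 < 1"
    and "- min 1 ((1 - p1) * (1 - p2) / (p1 * p2)) \<le> \<theta>"
    and "\<theta> \<le> min ((1 - p1) / p1) ((1 - p2) / p2)"
    and "measure M {\<omega>\<in>space M. I1 \<omega> = 0 \<and> I2 \<omega> = 0} = (1 - p1) * (1 - p2) + p1 * p2 * \<theta>"
    and "measure M {\<omega>\<in>space M. I1 \<omega> = 0 \<and> I2 \<omega> = 1} = (1 - p1) * p2 - p1 * p2 * \<theta>"
    and "measure M {\<omega>\<in>space M. I1 \<omega> = 1 \<and> I2 \<omega> = 0} = p1 * (1 - p2) - p1 * p2 * \<theta>"
    and "measure M {\<omega>\<in>space M. I1 \<omega> = 1 \<and> I2 \<omega> = 1} = p1 * p2 + p1 * p2 * \<theta>"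
    and "distributed M lborel U01 (indicator {0..1})"
    and "distributed M lborel U02 (indicator {0..1})"
    and "distributed M lborel U11 (indicator {0..1})"
    and "distributed M lborel U12 (indicator {0..1})"
    and "prob_space.indep_vars M (\<lambda>_. borel) (\<lambda>i. [U01, U02, U11, U12] ! i) {..<4}"
    and "indep_rv M (count_space UNIV) (\<lambda>\<omega>. (I1 \<omega>, I2 \<omega>))
           borel (\<lambda>\<omega>. (U01 \<omega>, U02 \<omega>, U11 \<omega>, U12 \<omega>))"
  shows "copula_of M
           (\<lambda>\<omega>. U01 \<omega> powr (1 - p1) * U11 \<omega> ^ I1 \<omega>)
           (\<lambda>\<omega>. U02 \<omega> powr (1 - p2) * U12 \<omega> ^ I2 \<omega>)
           (\<lambda>u v. u * v * (1 + \<theta> * (1 - u powr (p1 / (1 - p1))) * (1 - v powr (p2 / (1 - p2)))))"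
proof -
  note A = assms
  interpret prob_space M by fact
  have p: "0 < p1" "p1 < 1" "0 < p2" "p2 < 1" using A by auto
  have U01m[measurable]: "U01 \<in> borel_measurable M"
    using distributed_measurable[OF A(12)] by (simp add: measurable_lborel1)
  have U02m[measurable]: "U02 \<in> borel_measurable M"
    using distributed_measurable[OF A(13)] by (simp add: measurable_lborel1)
  have U11m[measurable]: "U11 \<in> borel_measurable M"
    using distributed_measurable[OF A(14)] by (simp add: measurable_lborel1)
  have U12m[measurable]: "U12 \<in> borel_measurable M"
    using distributed_measurable[OF A(15)] by (simp add: measurable_lborel1)
  have IJm: "(\<lambda>\<omega>. (I1 \<omega>, I2 \<omega>)) \<in> measurable M (count_space UNIV)"
    using A(17) unfolding indep_rv_def by simp
  have I1m[measurable]: "I1 \<in> measurable M (count_space UNIV)"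
    using measurable_comp[OF IJm, of fst "count_space UNIV"] by (simp add: o_def)
  have I2m[measurable]: "I2 \<in> measurable M (count_space UNIV)"
    using measurable_comp[OF IJm, of snd "count_space UNIV"] by (simp add: o_def)
  have Xm[measurable]: "(\<lambda>\<omega>. U01 \<omega> powr (1 - p1) * U11 \<omega> ^ I1 \<omega>) \<in> borel_measurable M"
    by (rule measurable_compose_countable[where g=I1 and f="\<lambda>i \<omega>. U01 \<omega> powr (1 - p1) * U11 \<omega> ^ i"]) measurable
  have Ym[measurable]: "(\<lambda>\<omega>. U02 \<omega> powr (1 - p2) * U12 \<omega> ^ I2 \<omega>) \<in> borel_measurable M"
    by (rule measurable_compose_countable[where g=I2 and f="\<lambda>i \<omega>. U02 \<omega> powr (1 - p2) * U12 \<omega> ^ i"]) measurable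
  note H4 = A(16)
  have indP: "indep_var (borel \<Otimes>\<^sub>M borel) (\<lambda>\<omega>. (U01 \<omega>, U11 \<omega>)) (borel \<Otimes>\<^sub>M borel) (\<lambda>\<omega>. (U02 \<omega>, U12 \<omega>))"
  proof -
    have "indep_var (borel \<Otimes>\<^sub>M borel) ((\<lambda>f::nat\<Rightarrow>real. (f 0, f 2)) \<circ> (\<lambda>\<omega>. restrict (\<lambda>i. ([U01, U02, U11, U12] ! i) \<omega>) {0,2}))
       (borel \<Otimes>\<^sub>M borel) ((\<lambda>f::nat\<Rightarrow>real. (f 1, f 3)) \<circ> (\<lambda>\<omega>. restrict (\<lambda>i. ([U01, U02, U11, U12] ! i) \<omega>) {1,3}))"
      by (rule indep_var_compose[OF indep_var_restrict[OF H4]]) (auto simp: lessThan_def)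
    then show ?thesis by (simp add: o_def)
  qed
  have ind1: "indep_var borel U01 borel U11"
  proof -
    have "indep_var borel ((\<lambda>f::nat\<Rightarrow>real. f 0) \<circ> (\<lambda>\<omega>. restrict (\<lambda>i. ([U01, U02, U11, U12] ! i) \<omega>) {0}))
       borel ((\<lambda>f::nat\<Rightarrow>real. f 2) \<circ> (\<lambda>\<omega>. restrict (\<lambda>i. ([U01, U02, U11, U12] ! i) \<omega>) {2}))"
      by (rule indep_var_compose[OF indep_var_restrict[OF H4]]) (auto simp: lessThan_def)
    then show ?thesis by (simp add: o_def)
  qed
  have ind2: "indep_var borel U02 borel U12"
  proof -
    have "indep_var borel ((\<lambda>f::nat\<Rightarrow>real. f 1) \<circ> (\<lambda>\<omega>. restrict (\<lambda>i. ([U01, U02, U11, U12] ! i) \<omega>) {1}))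
       borel ((\<lambda>f::nat\<Rightarrow>real. f 3) \<circ> (\<lambda>\<omega>. restrict (\<lambda>i. ([U01, U02, U11, U12] ! i) \<omega>) {3}))"
      by (rule indep_var_compose[OF indep_var_restrict[OF H4]]) (auto simp: lessThan_def)
    then show ?thesis by (simp add: o_def)
  qed
  define IJ where "IJ = (\<lambda>\<omega>. (I1 \<omega>, I2 \<omega>))"
  define UU where "UU = (\<lambda>\<omega>. (U01 \<omega>, U02 \<omega>, U11 \<omega>, U12 \<omega>))"
  have indS: "indep_set (sigma_sets (space M) {IJ -` A \<inter> space M | A. A \<in> sets (count_space UNIV)})
       (sigma_sets (space M) {UU -` B \<inter> space M | B. B \<in> sets (borel :: (real\<times>real\<times>real\<times>real) measure)})"
    using A(17) unfolding indep_rv_def IJ_def UU_def by simp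
  have KEY: "prob {\<omega>\<in>space M. I1 \<omega> = i \<and> I2 \<omega> = j \<and> (U01 \<omega>, U11 \<omega>) \<in> S \<and> (U02 \<omega>, U12 \<omega>) \<in> T}
     = prob {\<omega>\<in>space M. I1 \<omega> = i \<and> I2 \<omega> = j} * prob {\<omega>\<in>space M. (U01 \<omega>, U11 \<omega>) \<in> S}
       * prob {\<omega>\<in>space M. (U02 \<omega>, U12 \<omega>) \<in> T}"
    if S: "S \<in> sets (borel \<Otimes>\<^sub>M borel)" and T: "T \<in> sets (borel \<Otimes>\<^sub>M borel)" for i j S T
  proof -
    define W where "W = {z::real\<times>real\<times>real\<times>real \<in> space (borel \<Otimes>\<^sub>M (borel \<Otimes>\<^sub>M (borel \<Otimes>\<^sub>M borel))).
       (fst z, fst (snd (snd z))) \<in> S \<and> (fst (snd z), snd (snd (snd z))) \<in> T}"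
    have W1: "W \<in> sets (borel \<Otimes>\<^sub>M (borel \<Otimes>\<^sub>M (borel \<Otimes>\<^sub>M borel)))"
    proof -
      note [measurable] = S T
      show ?thesis unfolding W_def by measurable
    qed
    have W: "W \<in> sets (borel :: (real\<times>real\<times>real\<times>real) measure)"
      using W1 by (simp add: borel_prod[symmetric])
    define E where "E = IJ -` {(i,j)} \<inter> space M"
    define F where "F = UU -` W \<inter> space M"
    have "prob (E \<inter> F) = prob E * prob F"
    proof (rule indep_setD[OF indS])
      show "E \<in> sigma_sets (space M) {IJ -` A \<inter> space M | A. A \<in> sets (count_space UNIV)}"
        unfolding E_def by (intro sigma_sets.Basic) auto
      show "F \<in> sigma_sets (space M) {UU -` B \<inter> space M | B. B \<in> sets (borel :: (real\<times>real\<times>real\<times>real) measure)}"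
        unfolding F_def using W by (intro sigma_sets.Basic) auto
    qed
    moreover have "E \<inter> F = {\<omega>\<in>space M. I1 \<omega> = i \<and> I2 \<omega> = j \<and> (U01 \<omega>, U11 \<omega>) \<in> S \<and> (U02 \<omega>, U12 \<omega>) \<in> T}"
      unfolding E_def F_def W_def IJ_def UU_def by (auto simp: space_pair_measure)
    moreover have "E = {\<omega>\<in>space M. I1 \<omega> = i \<and> I2 \<omega> = j}"
      unfolding E_def IJ_def by auto
    moreover have "prob F = prob {\<omega>\<in>space M. (U01 \<omega>, U11 \<omega>) \<in> S} * prob {\<omega>\<in>space M. (U02 \<omega>, U12 \<omega>) \<in> T}"
    proof -
      have "F = (\<lambda>\<omega>. ((U01 \<omega>, U11 \<omega>), (U02 \<omega>, U12 \<omega>))) -` (S \<times> T) \<inter> space M"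
        unfolding F_def W_def UU_def by (auto simp: space_pair_measure)
      then have "prob F = prob ((\<lambda>\<omega>. (U01 \<omega>, U11 \<omega>)) -` S \<inter> space M) * prob ((\<lambda>\<omega>. (U02 \<omega>, U12 \<omega>)) -` T \<inter> space M)"
        using indep_varD[OF indP S T] by simp
      also have "(\<lambda>\<omega>. (U01 \<omega>, U11 \<omega>)) -` S \<inter> space M = {\<omega>\<in>space M. (U01 \<omega>, U11 \<omega>) \<in> S}" by auto
      also have "(\<lambda>\<omega>. (U02 \<omega>, U12 \<omega>)) -` T \<inter> space M = {\<omega>\<in>space M. (U02 \<omega>, U12 \<omega>) \<in> T}" by auto
      finally show ?thesis .
    qed
    ultimately show ?thesis by simp
  qed
  define clip where "clip = (\<lambda>x::real. max 0 (min 1 x))"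
  have clip01: "0 \<le> clip x" "clip x \<le> 1" for x unfolding clip_def by auto
  have clip_id: "0 \<le> x \<Longrightarrow> x \<le> 1 \<Longrightarrow> clip x = x" for x unfolding clip_def by auto
  define G1 where "G1 = (\<lambda>x::real. x powr (1/(1-p1)))"
  define G2 where "G2 = (\<lambda>x::real. x powr (1/(1-p2)))"
  define H1 where "H1 = (\<lambda>x::real. G1 x + (x - G1 x) / p1)"
  define H2 where "H2 = (\<lambda>x::real. G2 x + (x - G2 x) / p2)"
  define \<alpha> where "\<alpha> = (\<lambda>(i::nat) x. prob {\<omega>\<in>space M. U01 \<omega> powr (1 - p1) * U11 \<omega> ^ i \<le> x})"
  define \<beta> where "\<beta> = (\<lambda>(j::nat) y. prob {\<omega>\<in>space M. U02 \<omega> powr (1 - p2) * U12 \<omega> ^ j \<le> y})"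
  have a0: "\<alpha> 0 x = G1 (clip x)" for x
  proof -
    have "prob {\<omega>\<in>space M. U01 \<omega> powr (1 - p1) \<le> x} = G1 (clip x)"
      unfolding clip_def
      by (rule clip_cdf) (use uniform_powr[OF A(1) A(12), of "1-p1"] p in \<open>auto simp: G1_def\<close>)
    then show ?thesis unfolding \<alpha>_def by simp
  qed
  have a1: "\<alpha> 1 x = H1 (clip x)" for x
  proof -
    have "prob {\<omega>\<in>space M. U01 \<omega> powr (1 - p1) * U11 \<omega> \<le> x} = H1 (clip x)"
      unfolding clip_def
      by (rule clip_cdf) (use uniform_pair[OF A(1) A(12) A(14) ind1, of "1-p1"] p in \<open>auto simp: H1_def G1_def\<close>)
    then show ?thesis unfolding \<alpha>_def by simp
  qed
  have b0: "\<beta> 0 y = G2 (clip y)" for y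
  proof -
    have "prob {\<omega>\<in>space M. U02 \<omega> powr (1 - p2) \<le> y} = G2 (clip y)"
      unfolding clip_def
      by (rule clip_cdf) (use uniform_powr[OF A(1) A(13), of "1-p2"] p in \<open>auto simp: G2_def\<close>)
    then show ?thesis unfolding \<beta>_def by simp
  qed
  have b1: "\<beta> 1 y = H2 (clip y)" for y
  proof -
    have "prob {\<omega>\<in>space M. U02 \<omega> powr (1 - p2) * U12 \<omega> \<le> y} = H2 (clip y)"
      unfolding clip_def
      by (rule clip_cdf) (use uniform_pair[OF A(1) A(13) A(15) ind2, of "1-p2"] p in \<open>auto simp: H2_def G2_def\<close>)
    then show ?thesis unfolding \<beta>_def by simp
  qed
  define K where "K = {(0::nat,0::nat),(0,1),(1,0),(1,1)}"
  define E where "E = (\<lambda>k::nat\<times>nat. {\<omega>\<in>space M. I1 \<omega> = fst k \<and> I2 \<omega> = snd k})"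
  define f where "f = (\<lambda>k. prob (E k))"
  have Kfin: "finite K" unfolding K_def by simp
  have "{\<omega>\<in>space M. I1 \<omega> = a \<and> I2 \<omega> = b} \<in> events" for a b by measurable
  then have Eev: "E ` K \<subseteq> events" unfolding E_def by auto
  have Edisj: "disjoint_family_on E K" unfolding E_def disjoint_family_on_def by auto
  have fv: "f (0,0) = (1 - p1) * (1 - p2) + p1 * p2 * \<theta>" "f (0,1) = (1 - p1) * p2 - p1 * p2 * \<theta>"
    "f (1,0) = p1 * (1 - p2) - p1 * p2 * \<theta>" "f (1,1) = p1 * p2 + p1 * p2 * \<theta>"
    unfolding f_def E_def using A(8-11) by simp_all
  have sumK: "(\<Sum>k\<in>K. g k) = g (0,0) + g (0,1) + g (1,0) + g (1,1)" for g :: "nat\<times>nat \<Rightarrow> real"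
    unfolding K_def by simp
  have one: "(\<Sum>k\<in>K. prob (E k)) = 1"
    using fv unfolding sumK f_def by (simp add: algebra_simps)
  have Sm: "{z::real\<times>real. fst z powr cc * snd z ^ ii \<le> xx} \<in> sets (borel \<Otimes>\<^sub>M borel)" for cc xx and ii :: nat
  proof -
    have "{z::real\<times>real \<in> space (borel \<Otimes>\<^sub>M borel). fst z powr cc * snd z ^ ii \<le> xx} \<in> sets (borel \<Otimes>\<^sub>M borel)"
      by measurable
    then show ?thesis by (simp add: space_pair_measure)
  qed
  have topS: "UNIV \<in> sets (borel \<Otimes>\<^sub>M borel :: (real \<times> real) measure)"
    using sets.top[of "borel \<Otimes>\<^sub>M borel :: (real \<times> real) measure"] by (simp add: space_pair_measure)
  have joint: "prob {\<omega>\<in>space M. U01 \<omega> powr (1 - p1) * U11 \<omega> ^ I1 \<omega> \<le> x \<and> U02 \<omega> powr (1 - p2) * U12 \<omega> ^ I2 \<omega> \<le> y}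
     = (\<Sum>k\<in>K. f k * \<alpha> (fst k) x * \<beta> (snd k) y)" for x y
  proof -
    have "prob {\<omega>\<in>space M. U01 \<omega> powr (1 - p1) * U11 \<omega> ^ I1 \<omega> \<le> x \<and> U02 \<omega> powr (1 - p2) * U12 \<omega> ^ I2 \<omega> \<le> y}
      = (\<Sum>k\<in>K. prob ({\<omega>\<in>space M. U01 \<omega> powr (1 - p1) * U11 \<omega> ^ I1 \<omega> \<le> x \<and> U02 \<omega> powr (1 - p2) * U12 \<omega> ^ I2 \<omega> \<le> y} \<inter> E k))"
      by (rule decomp[OF Kfin Eev Edisj one]) measurable
    also have "\<dots> = (\<Sum>k\<in>K. f k * \<alpha> (fst k) x * \<beta> (snd k) y)"
    proof (rule sum.cong[OF refl])
      fix k :: "nat \<times> nat"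
      obtain i j where k: "k = (i,j)" by (cases k)
      have "{\<omega>\<in>space M. U01 \<omega> powr (1 - p1) * U11 \<omega> ^ I1 \<omega> \<le> x \<and> U02 \<omega> powr (1 - p2) * U12 \<omega> ^ I2 \<omega> \<le> y} \<inter> E k
        = {\<omega>\<in>space M. I1 \<omega> = i \<and> I2 \<omega> = j \<and> (U01 \<omega>, U11 \<omega>) \<in> {z. fst z powr (1-p1) * snd z ^ i \<le> x}
             \<and> (U02 \<omega>, U12 \<omega>) \<in> {z. fst z powr (1-p2) * snd z ^ j \<le> y}}"
        unfolding E_def k by auto
      moreover have "prob {\<omega>\<in>space M. I1 \<omega> = i \<and> I2 \<omega> = j \<and> (U01 \<omega>, U11 \<omega>) \<in> {z. fst z powr (1-p1) * snd z ^ i \<le> x}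
             \<and> (U02 \<omega>, U12 \<omega>) \<in> {z. fst z powr (1-p2) * snd z ^ j \<le> y}}
         = prob {\<omega>\<in>space M. I1 \<omega> = i \<and> I2 \<omega> = j} * prob {\<omega>\<in>space M. (U01 \<omega>, U11 \<omega>) \<in> {z. fst z powr (1-p1) * snd z ^ i \<le> x}}
           * prob {\<omega>\<in>space M. (U02 \<omega>, U12 \<omega>) \<in> {z. fst z powr (1-p2) * snd z ^ j \<le> y}}"
        by (rule KEY) (rule Sm)+
      ultimately show "prob ({\<omega>\<in>space M. U01 \<omega> powr (1 - p1) * U11 \<omega> ^ I1 \<omega> \<le> x \<and> U02 \<omega> powr (1 - p2) * U12 \<omega> ^ I2 \<omega> \<le> y} \<inter> E k)
         = f k * \<alpha> (fst k) x * \<beta> (snd k) y"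
        unfolding f_def \<alpha>_def \<beta>_def E_def k by simp
    qed
    finally show ?thesis .
  qed
  have marg1: "prob {\<omega>\<in>space M. U01 \<omega> powr (1 - p1) * U11 \<omega> ^ I1 \<omega> \<le> x}
     = (\<Sum>k\<in>K. f k * \<alpha> (fst k) x)" for x
  proof -
    have "prob {\<omega>\<in>space M. U01 \<omega> powr (1 - p1) * U11 \<omega> ^ I1 \<omega> \<le> x}
      = (\<Sum>k\<in>K. prob ({\<omega>\<in>space M. U01 \<omega> powr (1 - p1) * U11 \<omega> ^ I1 \<omega> \<le> x} \<inter> E k))"
      by (rule decomp[OF Kfin Eev Edisj one]) measurable
    also have "\<dots> = (\<Sum>k\<in>K. f k * \<alpha> (fst k) x)"
    proof (rule sum.cong[OF refl])
      fix k :: "nat \<times> nat"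
      obtain i j where k: "k = (i,j)" by (cases k)
      have "{\<omega>\<in>space M. U01 \<omega> powr (1 - p1) * U11 \<omega> ^ I1 \<omega> \<le> x} \<inter> E k
        = {\<omega>\<in>space M. I1 \<omega> = i \<and> I2 \<omega> = j \<and> (U01 \<omega>, U11 \<omega>) \<in> {z. fst z powr (1-p1) * snd z ^ i \<le> x}
             \<and> (U02 \<omega>, U12 \<omega>) \<in> UNIV}"
        unfolding E_def k by auto
      moreover have "prob {\<omega>\<in>space M. (U02 \<omega>, U12 \<omega>) \<in> UNIV} = 1"
        using prob_space by simp
      moreover have "prob {\<omega>\<in>space M. I1 \<omega> = i \<and> I2 \<omega> = j \<and> (U01 \<omega>, U11 \<omega>) \<in> {z. fst z powr (1-p1) * snd z ^ i \<le> x}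
             \<and> (U02 \<omega>, U12 \<omega>) \<in> UNIV}
         = prob {\<omega>\<in>space M. I1 \<omega> = i \<and> I2 \<omega> = j} * prob {\<omega>\<in>space M. (U01 \<omega>, U11 \<omega>) \<in> {z. fst z powr (1-p1) * snd z ^ i \<le> x}}
           * prob {\<omega>\<in>space M. (U02 \<omega>, U12 \<omega>) \<in> UNIV}"
        by (rule KEY) (rule Sm, rule topS)
      ultimately show "prob ({\<omega>\<in>space M. U01 \<omega> powr (1 - p1) * U11 \<omega> ^ I1 \<omega> \<le> x} \<inter> E k)
         = f k * \<alpha> (fst k) x"
        unfolding f_def \<alpha>_def E_def k by simp
    qed
    finally show ?thesis .
  qed
  have marg2: "prob {\<omega>\<in>space M. U02 \<omega> powr (1 - p2) * U12 \<omega> ^ I2 \<omega> \<le> y}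
     = (\<Sum>k\<in>K. f k * \<beta> (snd k) y)" for y
  proof -
    have "prob {\<omega>\<in>space M. U02 \<omega> powr (1 - p2) * U12 \<omega> ^ I2 \<omega> \<le> y}
      = (\<Sum>k\<in>K. prob ({\<omega>\<in>space M. U02 \<omega> powr (1 - p2) * U12 \<omega> ^ I2 \<omega> \<le> y} \<inter> E k))"
      by (rule decomp[OF Kfin Eev Edisj one]) measurable
    also have "\<dots> = (\<Sum>k\<in>K. f k * \<beta> (snd k) y)"
    proof (rule sum.cong[OF refl])
      fix k :: "nat \<times> nat"
      obtain i j where k: "k = (i,j)" by (cases k)
      have "{\<omega>\<in>space M. U02 \<omega> powr (1 - p2) * U12 \<omega> ^ I2 \<omega> \<le> y} \<inter> E k
        = {\<omega>\<in>space M. I1 \<omega> = i \<and> I2 \<omega> = j \<and> (U01 \<omega>, U11 \<omega>) \<in> UNIV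
             \<and> (U02 \<omega>, U12 \<omega>) \<in> {z. fst z powr (1-p2) * snd z ^ j \<le> y}}"
        unfolding E_def k by auto
      moreover have "prob {\<omega>\<in>space M. (U01 \<omega>, U11 \<omega>) \<in> UNIV} = 1"
        using prob_space by simp
      moreover have "prob {\<omega>\<in>space M. I1 \<omega> = i \<and> I2 \<omega> = j \<and> (U01 \<omega>, U11 \<omega>) \<in> UNIV
             \<and> (U02 \<omega>, U12 \<omega>) \<in> {z. fst z powr (1-p2) * snd z ^ j \<le> y}}
         = prob {\<omega>\<in>space M. I1 \<omega> = i \<and> I2 \<omega> = j} * prob {\<omega>\<in>space M. (U01 \<omega>, U11 \<omega>) \<in> UNIV}
           * prob {\<omega>\<in>space M. (U02 \<omega>, U12 \<omega>) \<in> {z. fst z powr (1-p2) * snd z ^ j \<le> y}}"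
        by (rule KEY) (rule topS, rule Sm)
      ultimately show "prob ({\<omega>\<in>space M. U02 \<omega> powr (1 - p2) * U12 \<omega> ^ I2 \<omega> \<le> y} \<inter> E k)
         = f k * \<beta> (snd k) y"
        unfolding f_def \<beta>_def E_def k by simp
    qed
    finally show ?thesis .
  qed
  define X where "X = (\<lambda>\<omega>. U01 \<omega> powr (1 - p1) * U11 \<omega> ^ I1 \<omega>)"
  define Y where "Y = (\<lambda>\<omega>. U02 \<omega> powr (1 - p2) * U12 \<omega> ^ I2 \<omega>)"
  define C where "C = (\<lambda>u v. u * v * (1 + \<theta> * (1 - u powr (p1 / (1 - p1))) * (1 - v powr (p2 / (1 - p2)))))"
  have G1s: "G1 t = t * t powr (p1/(1-p1))" if "0 \<le> t" for t
    unfolding G1_def using x_times_powr2[of p1 t] p that by simp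
  have G2s: "G2 t = t * t powr (p2/(1-p2))" if "0 \<le> t" for t
    unfolding G2_def using x_times_powr2[of p2 t] p that by simp
  have mX: "prob {\<omega>\<in>space M. X \<omega> \<le> x} = clip x" for x
  proof -
    have "prob {\<omega>\<in>space M. X \<omega> \<le> x} = f (0,0) * \<alpha> 0 x + f (0,1) * \<alpha> 0 x + f (1,0) * \<alpha> 1 x + f (1,1) * \<alpha> 1 x"
      using marg1[of x] unfolding X_def sumK by simp
    also have "\<dots> = clip x"
      unfolding a0 a1 H1_def fv G1s[OF clip01(1)] using p by (simp add: field_simps)
    finally show ?thesis .
  qed
  have mY: "prob {\<omega>\<in>space M. Y \<omega> \<le> y} = clip y" for y
  proof -
    have "prob {\<omega>\<in>space M. Y \<omega> \<le> y} = f (0,0) * \<beta> 0 y + f (0,1) * \<beta> 1 y + f (1,0) * \<beta> 0 y + f (1,1) * \<beta> 1 y"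
      using marg2[of y] unfolding Y_def sumK by simp
    also have "\<dots> = clip y"
      unfolding b0 b1 H2_def fv G2s[OF clip01(1)] using p by (simp add: field_simps)
    finally show ?thesis .
  qed
  have mXY: "prob {\<omega>\<in>space M. X \<omega> \<le> x \<and> Y \<omega> \<le> y} = C (clip x) (clip y)" for x y
  proof -
    have "prob {\<omega>\<in>space M. X \<omega> \<le> x \<and> Y \<omega> \<le> y} = f (0,0) * \<alpha> 0 x * \<beta> 0 y + f (0,1) * \<alpha> 0 x * \<beta> 1 y
        + f (1,0) * \<alpha> 1 x * \<beta> 0 y + f (1,1) * \<alpha> 1 x * \<beta> 1 y"
      using joint[of x y] unfolding X_def Y_def sumK by simp
    also have "\<dots> = C (clip x) (clip y)"
      unfolding a0 a1 b0 b1 H1_def H2_def fv G1s[OF clip01(1)] G2s[OF clip01(1)] C_def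
      using p by (simp add: field_simps)
    finally show ?thesis .
  qed
  have CP: "C u v = prob {\<omega>\<in>space M. X \<omega> \<le> u \<and> Y \<omega> \<le> v}"
    if "0 \<le> u" "u \<le> 1" "0 \<le> v" "v \<le> 1" for u v
    using mXY[of u v] clip_id that by simp
  have Xm'[measurable]: "X \<in> borel_measurable M" unfolding X_def by (rule Xm)
  have Ym'[measurable]: "Y \<in> borel_measurable M" unfolding Y_def by (rule Ym)
  have cop: "copula C"
    unfolding copula_def
  proof (intro conjI ballI allI impI)
    fix u :: real assume "u \<in> {0..1}"
    show "C u 0 = 0" "C 0 u = 0" "C u 1 = u" "C 1 u = u" unfolding C_def by simp_all
  next
    fix u1 u2 v1 v2 :: real
    assume h: "0 \<le> u1 \<and> u1 \<le> u2 \<and> u2 \<le> 1 \<and> 0 \<le> v1 \<and> v1 \<le> v2 \<and> v2 \<le> 1"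
    define R where "R = (\<lambda>u v. {\<omega>\<in>space M. X \<omega> \<le> u \<and> Y \<omega> \<le> v})"
    have Rev: "R u v \<in> events" for u v unfolding R_def by measurable
    have "C u2 v2 - C u2 v1 = prob (R u2 v2 - R u2 v1)"
      using h CP[of u2 v2] CP[of u2 v1] Rev
      by (subst finite_measure_Diff) (auto simp: R_def)
    moreover have "C u1 v2 - C u1 v1 = prob (R u1 v2 - R u1 v1)"
      using h CP[of u1 v2] CP[of u1 v1] Rev
      by (subst finite_measure_Diff) (auto simp: R_def)
    moreover have "prob (R u1 v2 - R u1 v1) \<le> prob (R u2 v2 - R u2 v1)"
      using h Rev by (intro finite_measure_mono) (auto simp: R_def)
    ultimately show "C u2 v2 - C u2 v1 - C u1 v2 + C u1 v1 \<ge> 0" by linarith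
  qed
  show ?thesis
    unfolding copula_of_def X_def[symmetric] Y_def[symmetric] C_def[symmetric]
    using cop mX mY mXY by simp
qed
end
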